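(* Let $X$ be a real Banach space and let $x, y \in X$ be non-zero. Consider the conditions: (i) there exist $\lambda > 0$ and $r>0$ such that the open ball $B(\lambda x, r)$ contains $y$ but does not contain $0$; (ii) there exist $\lambda < 0$ and $r>0$ such that the open ball $B(\lambda x, r)$ contains $y$ but does not contain $0$. Then at most one of (i), (ii) holds. Moreover, neither (i) nor (ii) holds if and only if $x \perp_B y$.
   Context: $B(c, r) = \{ z \in X : \|c - z\| < r\}$. For $x, y \in X$, $x$ is Birkhoff–James orthogonal to $y$, written $x \perp_B y$, if $\|x + \mu y\| \geq \|x\|$ for all $\mu \in \mathbb{R}$. *)

theory Defs
  imports "HOL-Analysis.Analysis"
begin

definition bj_orth :: "'a::real_normed_vector \<Rightarrow> 'a \<Rightarrow> bool" where
  "bj_orth x y \<longleftrightarrow> (\<forall>\<mu>::real. norm (x + \<mu> *\<^sub>R y) \<ge> norm x)"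

end

theory Submission
  imports Defs
begin

lemma condpos:
  fixes x y :: "'a::real_normed_vector"
  shows "(\<exists>l>0. \<exists>r>0. y \<in> ball (l *\<^sub>R x) r \<and> 0 \<notin> ball (l *\<^sub>R x) r)
     \<longleftrightarrow> (\<exists>m<0. norm (x + m *\<^sub>R y) < norm x)"
proof
  assume "\<exists>l>0. \<exists>r>0. y \<in> ball (l *\<^sub>R x) r \<and> 0 \<notin> ball (l *\<^sub>R x) r"
  then obtain l r where l: "l > 0" "r > 0" and h: "norm (l *\<^sub>R x - y) < r" "norm (l *\<^sub>R x) \<ge> r"
    by (auto simp: dist_norm)
  have "x + (-1/l) *\<^sub>R y = (1/l) *\<^sub>R (l *\<^sub>R x - y)" using l by (simp add: algebra_simps)
  hence "norm (x + (-1/l) *\<^sub>R y) = (1/l) * norm (l *\<^sub>R x - y)" using l by simp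
  also have "\<dots> < (1/l) * (l * norm x)" using h l by (intro mult_strict_left_mono) auto
  also have "\<dots> = norm x" using l by simp
  finally show "\<exists>m<0. norm (x + m *\<^sub>R y) < norm x" using l by (intro exI[of _ "-1/l"]) auto
next
  assume "\<exists>m<0. norm (x + m *\<^sub>R y) < norm x"
  then obtain m where m: "m < 0" "norm (x + m *\<^sub>R y) < norm x" by auto
  define l where "l = -1/m"
  have l: "l > 0" using m by (simp add: l_def)
  have "l *\<^sub>R x - y = l *\<^sub>R (x + m *\<^sub>R y)" using m by (simp add: l_def algebra_simps)
  hence "norm (l *\<^sub>R x - y) = l * norm (x + m *\<^sub>R y)" using l by simp
  also have "\<dots> < l * norm x" using l m by simp
  finally have "norm (l *\<^sub>R x - y) < l * norm x" .
  moreover have "l * norm x > 0" using \<open>norm (l *\<^sub>R x - y) < l * norm x\<close> norm_ge_zero[of "l *\<^sub>R x - y"]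
    by linarith
  ultimately show "\<exists>l>0. \<exists>r>0. y \<in> ball (l *\<^sub>R x) r \<and> 0 \<notin> ball (l *\<^sub>R x) r"
    using l by (intro exI[of _ l] conjI exI[of _ "l * norm x"]) (auto simp: dist_norm)
qed

lemma condneg:
  fixes x y :: "'a::real_normed_vector"
  shows "(\<exists>l<0. \<exists>r>0. y \<in> ball (l *\<^sub>R x) r \<and> 0 \<notin> ball (l *\<^sub>R x) r)
     \<longleftrightarrow> (\<exists>m>0. norm (x + m *\<^sub>R y) < norm x)"
proof -
  have "(\<exists>l<0. \<exists>r>0. y \<in> ball (l *\<^sub>R x) r \<and> 0 \<notin> ball (l *\<^sub>R x) r)
     \<longleftrightarrow> (\<exists>l>0. \<exists>r>0. y \<in> ball (l *\<^sub>R (-x)) r \<and> 0 \<notin> ball (l *\<^sub>R (-x)) r)"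
  proof -
    have e: "\<And>Q. (\<exists>l<0. Q (l *\<^sub>R x)) \<longleftrightarrow> (\<exists>l>0. Q (l *\<^sub>R (-x)))"
    proof
      fix Q assume "\<exists>l<0. Q (l *\<^sub>R x)"
      then obtain l where "l < 0" "Q (l *\<^sub>R x)" by blast
      thus "\<exists>l>0. Q (l *\<^sub>R (-x))" by (intro exI[of _ "-l"]) simp
    next
      fix Q assume "\<exists>l>0. Q (l *\<^sub>R (-x))"
      then obtain l where "l > 0" "Q (l *\<^sub>R (-x))" by blast
      thus "\<exists>l<0. Q (l *\<^sub>R x)" by (intro exI[of _ "-l"]) simp
    qed
    show ?thesis by (rule e)
  qed
  also have "\<dots> \<longleftrightarrow> (\<exists>m<0. norm (-x + m *\<^sub>R y) < norm (-x))" by (rule condpos)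
  also have "\<dots> \<longleftrightarrow> (\<exists>m>0. norm (x + m *\<^sub>R y) < norm x)"
  proof -
    have "norm (-x + m *\<^sub>R y) = norm (x + (-m) *\<^sub>R y)" for m
    proof -
      have "-x + m *\<^sub>R y = - (x + (-m) *\<^sub>R y)" by simp
      thus ?thesis by (simp only: norm_minus_cancel)
    qed
    hence "(\<exists>m<0. norm (-x + m *\<^sub>R y) < norm (-x)) \<longleftrightarrow> (\<exists>m<0. norm (x + (-m) *\<^sub>R y) < norm x)"
      by simp
    also have "\<dots> \<longleftrightarrow> (\<exists>m>0. norm (x + m *\<^sub>R y) < norm x)"
    proof
      assume "\<exists>m<0. norm (x + (-m) *\<^sub>R y) < norm x"
      then obtain m where "m < 0" "norm (x + (-m) *\<^sub>R y) < norm x" by blast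
      thus "\<exists>m>0. norm (x + m *\<^sub>R y) < norm x" by (intro exI[of _ "-m"]) simp
    next
      assume "\<exists>m>0. norm (x + m *\<^sub>R y) < norm x"
      then obtain m where "m > 0" "norm (x + m *\<^sub>R y) < norm x" by blast
      thus "\<exists>m<0. norm (x + (-m) *\<^sub>R y) < norm x" by (intro exI[of _ "-m"]) simp
    qed
    finally show ?thesis .
  qed
  finally show ?thesis .
qed

lemma notboth:
  fixes x y :: "'a::real_normed_vector"
  assumes "a < 0" "norm (x + a *\<^sub>R y) < norm x" "b > 0" "norm (x + b *\<^sub>R y) < norm x"
  shows False
proof -
  define t where "t = b / (b - a)"
  have t: "0 < t" "t < 1" using assms by (auto simp: t_def field_simps)
  have "t * a + (1 - t) * b = 0" using assms by (simp add: t_def field_simps)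
  hence eq: "t *\<^sub>R (x + a *\<^sub>R y) + (1 - t) *\<^sub>R (x + b *\<^sub>R y) = x"
    by (simp add: algebra_simps flip: scaleR_add_left)
  have "norm x = norm (t *\<^sub>R (x + a *\<^sub>R y) + (1 - t) *\<^sub>R (x + b *\<^sub>R y))"
    by (simp only: eq)
  also have "\<dots> \<le> norm (t *\<^sub>R (x + a *\<^sub>R y)) + norm ((1 - t) *\<^sub>R (x + b *\<^sub>R y))"
    by (rule norm_triangle_ineq)
  also have "\<dots> = t * norm (x + a *\<^sub>R y) + (1 - t) * norm (x + b *\<^sub>R y)" using t by simp
  also have "\<dots> < t * norm x + (1 - t) * norm x"
    using t assms by (intro add_strict_mono mult_strict_left_mono) auto
  also have "\<dots> = norm x" by (simp add: algebra_simps)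
  finally show False by simp
qed

theorem mainTheorem3:
  fixes x y :: "'a::banach"
  assumes "x \<noteq> 0" and "y \<noteq> 0"
  shows "\<not> ((\<exists>l>0. \<exists>r>0. y \<in> ball (l *\<^sub>R x) r \<and> 0 \<notin> ball (l *\<^sub>R x) r)
            \<and> (\<exists>l<0. \<exists>r>0. y \<in> ball (l *\<^sub>R x) r \<and> 0 \<notin> ball (l *\<^sub>R x) r))
         \<and> ((\<not> (\<exists>l>0. \<exists>r>0. y \<in> ball (l *\<^sub>R x) r \<and> 0 \<notin> ball (l *\<^sub>R x) r)
             \<and> \<not> (\<exists>l<0. \<exists>r>0. y \<in> ball (l *\<^sub>R x) r \<and> 0 \<notin> ball (l *\<^sub>R x) r))
            \<longleftrightarrow> bj_orth x y)"
  unfolding condpos condneg bj_orth_def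
proof (intro conjI iffI allI)
  show "\<not> ((\<exists>m<0. norm (x + m *\<^sub>R y) < norm x) \<and> (\<exists>m>0. norm (x + m *\<^sub>R y) < norm x))"
    using notboth by blast
next
  fix \<mu> :: real
  assume h: "\<not> (\<exists>m<0. norm (x + m *\<^sub>R y) < norm x) \<and> \<not> (\<exists>m>0. norm (x + m *\<^sub>R y) < norm x)"
  show "norm x \<le> norm (x + \<mu> *\<^sub>R y)"
  proof (cases "\<mu> < 0")
    case True thus ?thesis using h by (meson not_le)
  next
    case False
    show ?thesis
    proof (cases "\<mu> = 0")
      case True thus ?thesis by simp
    next
      case False
      hence "\<mu> > 0" using \<open>\<not> \<mu> < 0\<close> by simp
      thus ?thesis using h by (meson not_le)
    qed
  qed
next
  assume "\<forall>\<mu>::real. norm x \<le> norm (x + \<mu> *\<^sub>R y)"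
  thus "\<not> (\<exists>m<0. norm (x + m *\<^sub>R y) < norm x)"
    using not_le by blast
next
  assume "\<forall>\<mu>::real. norm x \<le> norm (x + \<mu> *\<^sub>R y)"
  thus "\<not> (\<exists>m>0. norm (x + m *\<^sub>R y) < norm x)"
    using not_le by blast
qed

end
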